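(* If a system $C=(1,c_2,c_3,c_4,c_5,2c_5-c_2)$ is canonical and its subsystem $(1,c_2,c_3,c_4,c_5)$ is noncanonical, then $C=(1,2,3,c_4,c_4+1,2c_4)$ and $c_4>4$.
   Context: A system is a tuple $C=(c_1,\dots,c_n)$ of integers with $1=c_1<c_2<\dots<c_n$; for $k\le n$, $(c_1,\dots,c_k)$ is a subsystem. For a positive integer $v$, $\mathrm{opt}_C(v)$ is the minimum of $\sum_i x_i$ over $x\in\mathbb{Z}_{\ge0}^n$ with $\sum_i c_ix_i=v$. The greedy representation of $v$ is produced by: for $i=n$ down to $1$, while $c_i\le$ remaining value, take a coin $c_i$. $\mathrm{grd}_C(v)$ is its number of coins. A positive integer $w$ is a counterexample if $\mathrm{opt}_C(w)<\mathrm{grd}_C(w)$; $C$ is canonical if it has none, noncanonical otherwise. *)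

theory Defs
  imports Main
begin

definition is_system :: "nat list \<Rightarrow> bool" where
  "is_system cs \<longleftrightarrow> cs \<noteq> [] \<and> hd cs = 1 \<and> sorted_wrt (<) cs"

definition reps :: "nat list \<Rightarrow> nat \<Rightarrow> nat list set" where
  "reps cs v = {x. length x = length cs \<and> (\<Sum>i<length cs. cs ! i * x ! i) = v}"

definition opt :: "nat list \<Rightarrow> nat \<Rightarrow> nat" where
  "opt cs v = (LEAST k. \<exists>x\<in>reps cs v. sum_list x = k)"

fun grd_desc :: "nat list \<Rightarrow> nat \<Rightarrow> nat" where
  "grd_desc [] v = 0"
| "grd_desc (c # cs) v = v div c + grd_desc cs (v mod c)"

definition grd :: "nat list \<Rightarrow> nat \<Rightarrow> nat" where
  "grd cs v = grd_desc (rev cs) v"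

definition counterexample :: "nat list \<Rightarrow> nat \<Rightarrow> bool" where
  "counterexample cs w \<longleftrightarrow> w > 0 \<and> opt cs w < grd cs w"

definition canonical :: "nat list \<Rightarrow> bool" where
  "canonical cs \<longleftrightarrow> (\<forall>w. \<not> counterexample cs w)"

end

theory Submission imports Defs begin

lemma reps5: "[x0,x1,x2,x3,x4] \<in> reps [1,a,b,c,d] v \<longleftrightarrow> x0 + a*x1 + b*x2 + c*x3 + d*x4 = v"
  by (simp add: reps_def numeral_eq_Suc lessThan_Suc algebra_simps)

lemma reps6: "[x0,x1,x2,x3,x4,x5] \<in> reps [1,a,b,c,d,e] v \<longleftrightarrow> x0 + a*x1 + b*x2 + c*x3 + d*x4 + e*x5 = v"
  by (simp add: reps_def numeral_eq_Suc lessThan_Suc algebra_simps)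

lemma reps5E: assumes "x \<in> reps [1,a,b,c,d] v"
  obtains x0 x1 x2 x3 x4 where "x = [x0,x1,x2,x3,x4]" "x0 + a*x1 + b*x2 + c*x3 + d*x4 = v"
proof -
  have "length x = 5" using assms by (simp add: reps_def)
  then obtain x0 x1 x2 x3 x4 where "x = [x0,x1,x2,x3,x4]"
    by (auto simp: numeral_eq_Suc length_Suc_conv)
  then show ?thesis using that assms reps5 by blast
qed

lemma opt_le: "x \<in> reps cs v \<Longrightarrow> opt cs v \<le> sum_list x"
  unfolding opt_def by (rule Least_le) blast

lemma opt_ex: "x \<in> reps cs v \<Longrightarrow> \<exists>y\<in>reps cs v. sum_list y = opt cs v"
  unfolding opt_def by (rule LeastI_ex) blast

lemma grd5: "grd [1,a,b,c,d] v = v div d + ((v mod d) div c + ((v mod d mod c) div b + ((v mod d mod c mod b) div a + v mod d mod c mod b mod a)))"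
  by (simp add: grd_def)

lemma grd5_rep: "[v mod d mod c mod b mod a, (v mod d mod c mod b) div a, (v mod d mod c) div b, (v mod d) div c, v div d] \<in> reps [1,a,b,c,d] v"
  unfolding reps5 using mult_div_mod_eq[of d v] mult_div_mod_eq[of c "v mod d"]
    mult_div_mod_eq[of b "v mod d mod c"] mult_div_mod_eq[of a "v mod d mod c mod b"]
  by linarith

lemma grd5_sub: "0 < d \<Longrightarrow> d \<le> u \<Longrightarrow> grd [1,a,b,c,d] u = grd [1,a,b,c,d] (u - d) + 1"
  unfolding grd5 by (simp add: le_div_geq le_mod_geq)

lemma kz:
  fixes a b c d w q :: nat
  defines "S \<equiv> [1,a,b,c,d]"
  assumes minimal: "\<And>v. v < w \<Longrightarrow> \<not> counterexample S v"
    and cw: "counterexample S w"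
    and q: "0 < q" "q \<le> w"
    and rem: "opt S (w - q) + 1 \<le> opt S w"
    and add: "\<And>v. opt S (v + q) \<le> grd S v + 1"
    and d: "0 < d" "d \<le> w - q"
  shows False
proof -
  define u where "u = w - q"
  have "u < w" using q d unfolding u_def by simp
  moreover have "0 < u" using d unfolding u_def by simp
  ultimately have "grd S u \<le> opt S u" using minimal[of u] unfolding counterexample_def by simp
  have gu: "grd S u = grd S (u - d) + 1" unfolding S_def using d by (intro grd5_sub) (auto simp: u_def)
  have eq: "w - d = (u - d) + q" using q d unfolding u_def by simp
  have "opt S (w - d) \<le> grd S (u - d) + 1" unfolding eq by (rule add)
  have gw: "grd S w = grd S (w - d) + 1" unfolding S_def using d q by (intro grd5_sub) auto
  have "opt S w < grd S w" using cw unfolding counterexample_def by simp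
  have "0 < w - d" using d q by auto
  have "counterexample S (w - d)" unfolding counterexample_def
    using \<open>0 < w - d\<close>
    using \<open>opt S (w - d) \<le> grd S (u - d) + 1\<close> \<open>grd S u \<le> opt S u\<close> gu gw rem
      \<open>opt S w < grd S w\<close> d q unfolding u_def by auto
  moreover have "w - d < w" using d q by auto
  ultimately show False using minimal by blast
qed

lemma add_coin: "opt [1,a,b,c,d] (v + (y0 + a*y1 + b*y2 + c*y3 + d*y4)) \<le> grd [1,a,b,c,d] v + (y0+y1+y2+y3+y4)"
proof -
  let ?g = "[v mod d mod c mod b mod a + y0, (v mod d mod c mod b) div a + y1, (v mod d mod c) div b + y2, (v mod d) div c + y3, v div d + y4]"
  have e: "v mod d mod c mod b mod a + a * ((v mod d mod c mod b) div a) + b * ((v mod d mod c) div b) + c * ((v mod d) div c) + d * (v div d) = v"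
    using grd5_rep[of v d c b a] unfolding reps5 .
  have "?g \<in> reps [1,a,b,c,d] (v + (y0 + a*y1 + b*y2 + c*y3 + d*y4))"
    unfolding reps5 using e by (simp add: algebra_simps)
  from opt_le[OF this] show ?thesis unfolding grd5 by simp
qed

lemma kz2:
  fixes a b c d w :: nat
  assumes minimal: "\<And>v. v < w \<Longrightarrow> \<not> counterexample [1,a,b,c,d] v"
    and cw: "counterexample [1,a,b,c,d] w"
    and o: "opt [1,a,b,c,d] w = (z0+z1+z2+z3+z4) + (y0+y1+y2+y3+y4)"
    and eq: "(z0+y0) + a*(z1+y1) + b*(z2+y2) + c*(z3+y3) + d*(z4+y4) = w"
    and q: "0 < y0 + a*y1 + b*y2 + c*y3 + d*y4" "y0+y1+y2+y3+y4 = 1"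
    and d: "0 < d" "d \<le> w - (y0 + a*y1 + b*y2 + c*y3 + d*y4)"
  shows False
proof -
  let ?q = "y0 + a*y1 + b*y2 + c*y3 + d*y4"
  have wq: "w = (z0 + a*z1 + b*z2 + c*z3 + d*z4) + ?q" using eq by (simp add: algebra_simps)
  have "[z0,z1,z2,z3,z4] \<in> reps [1,a,b,c,d] (w - ?q)" unfolding reps5 using wq by simp
  from opt_le[OF this] have rem: "opt [1,a,b,c,d] (w - ?q) + 1 \<le> opt [1,a,b,c,d] w"
    using o q by simp
  have add: "\<And>v. opt [1,a,b,c,d] (v + ?q) \<le> grd [1,a,b,c,d] v + 1"
    using add_coin q(2) by metis
  have qw: "?q \<le> w" by (subst wq) (rule le_add2)
  show False
    by (rule kz[OF minimal cw q(1) qw rem add d])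
qed

theorem lemma7:
  fixes c2 c3 c4 c5 :: nat
  assumes "is_system [1, c2, c3, c4, c5, 2 * c5 - c2]"
    and "canonical [1, c2, c3, c4, c5, 2 * c5 - c2]"
    and "\<not> canonical [1, c2, c3, c4, c5]"
  shows "[1, c2, c3, c4, c5, 2 * c5 - c2] = [1, 2, 3, c4, c4 + 1, 2 * c4] \<and> c4 > 4"
proof -
  define S where "S = [1, c2, c3, c4, c5]"
  define e where "e = 2 * c5 - c2"
  have ord: "1 < c2" "c2 < c3" "c3 < c4" "c4 < c5" "c5 < e"
    using assms(1) unfolding is_system_def e_def by auto
  have canC: "\<And>v. \<not> counterexample [1,c2,c3,c4,c5,e] v" using assms(2) unfolding canonical_def e_def by blast
  obtain w0 where "counterexample S w0" using assms(3) unfolding canonical_def S_def by blast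
  define w where "w = (LEAST w. counterexample S w)"
  have cw: "counterexample S w" unfolding w_def by (rule LeastI) fact
  have minimal: "\<And>v. v < w \<Longrightarrow> \<not> counterexample S v" unfolding w_def using not_less_Least by blast
  have wpos: "0 < w" and lt: "opt S w < grd S w" using cw unfolding counterexample_def by auto
  have "[w,0,0,0,0] \<in> reps S w" unfolding S_def reps5 by simp
  then obtain x where "x \<in> reps S w" "sum_list x = opt S w" using opt_ex by blast
  then obtain x0 x1 x2 x3 x4 where xe: "x = [x0,x1,x2,x3,x4]" and eqn: "x0 + c2*x1 + c3*x2 + c4*x3 + c5*x4 = w"
    unfolding S_def by (elim reps5E)
  have o: "opt S w = x0+x1+x2+x3+x4" using \<open>sum_list x = opt S w\<close> xe by simp
  note kzS = kz2[OF minimal[unfolded S_def] cw[unfolded S_def]]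
  have h0: "w < c5 + 1" if "0 < x0"
  proof (rule ccontr)
    assume "\<not> w < c5 + 1"
    show False
      by (rule kzS[of "x0-1" x1 x2 x3 x4 1 0 0 0 0]) (use o eqn that \<open>\<not> w < c5 + 1\<close> ord in \<open>auto simp: S_def\<close>)
  qed
  have h1: "w < c5 + c2" if "0 < x1"
  proof (rule ccontr)
    assume "\<not> w < c5 + c2"
    show False
      by (rule kzS[of x0 "x1-1" x2 x3 x4 0 1 0 0 0]) (use o eqn that \<open>\<not> w < c5 + c2\<close> ord in \<open>auto simp: S_def algebra_simps\<close>)
  qed
  have h2: "w < c5 + c3" if "0 < x2"
  proof (rule ccontr)
    assume "\<not> w < c5 + c3"
    show False
      by (rule kzS[of x0 x1 "x2-1" x3 x4 0 0 1 0 0]) (use o eqn that \<open>\<not> w < c5 + c3\<close> ord in \<open>auto simp: S_def algebra_simps\<close>)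
  qed
  have h3: "w < c5 + c4" if "0 < x3"
  proof (rule ccontr)
    assume "\<not> w < c5 + c4"
    show False
      by (rule kzS[of x0 x1 x2 "x3-1" x4 0 0 0 1 0]) (use o eqn that \<open>\<not> w < c5 + c4\<close> ord in \<open>auto simp: S_def algebra_simps\<close>)
  qed
  have h4: "w < c5 + c5" if "0 < x4"
  proof (rule ccontr)
    assume "\<not> w < c5 + c5"
    show False
      by (rule kzS[of x0 x1 x2 x3 "x4-1" 0 0 0 0 1]) (use o eqn that \<open>\<not> w < c5 + c5\<close> ord in \<open>auto simp: S_def algebra_simps\<close>)
  qed
  have we: "e \<le> w"
  proof (rule ccontr)
    assume "\<not> e \<le> w"
    have "[x0,x1,x2,x3,x4,0] \<in> reps [1,c2,c3,c4,c5,e] w" unfolding reps6 using eqn by simp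
    from opt_le[OF this] have "opt [1,c2,c3,c4,c5,e] w \<le> opt S w" using o by simp
    moreover have "grd [1,c2,c3,c4,c5,e] w = grd S w"
      using \<open>\<not> e \<le> w\<close> by (simp add: grd_def S_def)
    ultimately have "counterexample [1,c2,c3,c4,c5,e] w" using lt wpos unfolding counterexample_def by simp
    with canC show False by blast
  qed
  have wc: "w < c5 + c4"
  proof (rule ccontr)
    assume nw: "\<not> w < c5 + c4"
    then have "x0 = 0" "x1 = 0" "x2 = 0" "x3 = 0" using h0 h1 h2 h3 ord by auto
    then have "w = c5 * x4" using eqn by simp
    moreover have "x4 \<noteq> 0" using wpos \<open>w = c5 * x4\<close> by auto
    moreover have "x4 \<noteq> 1" using \<open>w = c5 * x4\<close> we ord by auto
    ultimately have "x4 \<ge> 2" by linarith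
    then have "c5 * x4 \<ge> c5 * 2" by (rule mult_le_mono2)
    then have "w \<ge> c5 + c5" using \<open>w = c5 * x4\<close> by linarith
    then show False using h4 \<open>x4 \<noteq> 0\<close> by auto
  qed
  have d1: "c5 < c4 + c2" using we wc ord unfolding e_def by linarith
  have "[0,0,0,1,1,0] \<in> reps [1,c2,c3,c4,c5,e] (c4 + c5)" unfolding reps6 by simp
  from opt_le[OF this] have oC: "opt [1,c2,c3,c4,c5,e] (c4 + c5) \<le> 2" by simp
  have "(c4 + c5) div e = 1" using d1 ord unfolding e_def
    by (intro div_nat_eqI) auto
  moreover have "(c4 + c5) mod e = c4 + c2 - c5" using d1 ord unfolding e_def
    by (simp add: mod_if; linarith)
  ultimately have "grd [1,c2,c3,c4,c5,e] (c4 + c5) = 1 + (c4 + c2 - c5)" using d1 ord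
    by (simp add: grd_def)
  moreover have "\<not> counterexample [1,c2,c3,c4,c5,e] (c4 + c5)" using canC by blast
  ultimately have d2: "c5 = c4 + c2 - 1" using oC d1 ord unfolding counterexample_def by auto
  have wv: "w = 2 * c4 + c2 - 2" using we wc d2 ord unfolding e_def by auto
  have "\<not> w < c5 + 1" "\<not> w < c5 + c2" "\<not> w < c5 + c3" using wv d2 ord by linarith+
  then have "x0 = 0" "x1 = 0" "x2 = 0" using h0 h1 h2 by (meson neq0_conv)+
  then have eq2: "c4 * x3 + c5 * x4 = w" using eqn by simp
  have "x4 = 0"
  proof (rule ccontr)
    assume "x4 \<noteq> 0"
    then consider "x4 = 1" | "x4 \<ge> 2" by linarith
    then show False
    proof cases
      case 1
      then have "c4 * x3 = c4 - 1" using eq2 wv d2 ord by auto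
      show False
      proof (cases "x3 = 0")
        case True
        then show False using \<open>c4 * x3 = c4 - 1\<close> ord by simp
      next
        case False
        then have "c4 * x3 \<ge> c4 * 1" by (intro mult_le_mono2) simp
        then show False using \<open>c4 * x3 = c4 - 1\<close> ord by simp
      qed
    next
      case 2
      then have m: "c5 * x4 \<ge> c5 * 2" by (rule mult_le_mono2)
      have "c5 * x4 \<le> w" by (subst eq2[symmetric]) (rule le_add2)
      moreover have "w < c5 * 2" using wv d2 ord(1) by linarith
      ultimately show False using m by linarith
    qed
  qed
  then have eq3: "c4 * x3 = 2 * c4 + c2 - 2" using eq2 wv by simp
  have "x3 = 2 \<and> c2 = 2"
  proof -
    consider "x3 \<le> 1" | "x3 = 2" | "x3 \<ge> 3" by linarith
    then show ?thesis
    proof cases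
      case 1
      then have "c4 * x3 \<le> c4 * 1" by (intro mult_le_mono2)
      then show ?thesis using eq3 ord(1,2,3) by linarith
    next
      case 2
      then have "2 * c4 = 2 * c4 + c2 - 2" using eq3 by (simp add: mult.commute)
      then show ?thesis using 2 ord(1) by linarith
    next
      case 3
      then have "c4 * x3 \<ge> c4 * 3" by (intro mult_le_mono2)
      then show ?thesis using eq3 ord(1,2,3) by linarith
    qed
  qed
  then have a2: "c2 = 2" and o2: "opt S w = 2" using o \<open>x0 = 0\<close> \<open>x1 = 0\<close> \<open>x2 = 0\<close> \<open>x4 = 0\<close> by auto
  have d3: "c5 = c4 + 1" using d2 a2 by simp
  have w2: "w = 2 * c4" using wv a2 by simp
  have b1: "c3 \<noteq> c4 - 1"
  proof
    assume b: "c3 = c4 - 1"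
    have "(2 * c4) div (c4 + 1) = 1" using ord by (intro div_nat_eqI) auto
    moreover have "(2 * c4) mod (c4 + 1) = c4 - 1" using ord by (simp add: mod_if)
    ultimately have "grd S w = 2" using b ord a2 d3 w2 by (simp add: grd_def S_def)
    then show False using lt o2 by simp
  qed
  have "[0,0,1,1,0,0] \<in> reps [1,c2,c3,c4,c5,e] (c4 + c3)" unfolding reps6 by simp
  from opt_le[OF this] have oC2: "opt [1,c2,c3,c4,c5,e] (c4 + c3) \<le> 2" by simp
  have e2: "e = 2 * c4" unfolding e_def using d3 a2 by simp
  have "(c4 + c3) mod (c4 + 1) = c3 - 1" using ord by (simp add: mod_if)
  moreover have "(c4 + c3) div (c4 + 1) = 1" using ord by (intro div_nat_eqI) auto
  ultimately have "grd [1,c2,c3,c4,c5,e] (c4 + c3) = 1 + ((c3 - 1) div 2 + (c3 - 1) mod 2)"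
    using ord a2 d3 e2 by (simp add: grd_def)
  moreover have "\<not> counterexample [1,c2,c3,c4,c5,e] (c4 + c3)" using canC by blast
  ultimately have "(c3 - 1) div 2 + (c3 - 1) mod 2 \<le> 1" using oC2 unfolding counterexample_def by auto
  moreover have "c3 - 1 = 2 * ((c3 - 1) div 2) + (c3 - 1) mod 2" by simp
  ultimately have "c3 \<le> 3" by linarith
  then have b3: "c3 = 3" using ord(2) a2 by linarith
  have "c4 > 4" using b1 b3 ord(3) by linarith
  then show ?thesis using a2 b3 d3 by simp
qed

end
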